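(* Let $\bar{\boldsymbol{\theta}}_{\mathrm{init}}:=(\boldsymbol{I},\boldsymbol{I})$. For every constant $c\in(0,1)$, letting $T^-_c(\alpha)=\frac{1-c}{\lambda}\log\alpha$, it holds for all $(i,j)\in[d]\times[d]$ that $$\lim_{\alpha\to+\infty}\big[\boldsymbol{W}(\boldsymbol{\theta}(T^-_c(\alpha);\alpha\bar{\boldsymbol{\theta}}_{\mathrm{init}}))\big]_{ij}=\begin{cases}\boldsymbol{X}^*_{ij}&\text{if }(i,j)\in\Omega\text{ or }(j,i)\in\Omega,\\ 0&\text{otherwise.}\end{cases}$$
   Context: $\boldsymbol{X}^*\in\mathbb{R}^{d\times d}$ is a symmetric matrix and $\Omega\subseteq[d]\times[d]$ is the set of observed entries; the training data is $\{(\boldsymbol{x}_k,y_k)\}_{k=1}^n$ with $\boldsymbol{x}_k=(i_k,j_k)$ ranging over $\Omega$ and $y_k=\boldsymbol{X}^*_{i_kj_k}$. Parameters $\boldsymbol{\theta}=(\boldsymbol{U},\boldsymbol{V})$ with $\boldsymbol{U},\boldsymbol{V}\in\mathbb{R}^{d\times d}$, $\boldsymbol{W}(\boldsymbol{\theta}):=\boldsymbol{U}\boldsymbol{U}^\top-\boldsymbol{V}\boldsymbol{V}^\top$, and model output $f(\boldsymbol{\theta};(i,j))=[\boldsymbol{W}(\boldsymbol{\theta})]_{ij}$. The loss is $\mathcal{L}_\lambda(\boldsymbol{\theta})=\frac1n\sum_{k=1}^n(f(\boldsymbol{\theta};\boldsymbol{x}_k)-y_k)^2+\frac\lambda2(\|\boldsymbol{U}\|_F^2+\|\boldsymbol{V}\|_F^2)$,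 with weight decay $\lambda=\lambda(\alpha)=\Theta(\alpha^{-p})$ for a constant $p>0$. $\boldsymbol{\theta}(t;\boldsymbol{\theta}_0)$ is the gradient flow $\frac{d\boldsymbol{\theta}}{dt}=-\nabla\mathcal{L}_\lambda(\boldsymbol{\theta})$ from $\boldsymbol{\theta}_0$; the initialization is $\alpha\bar{\boldsymbol{\theta}}_{\mathrm{init}}=(\alpha\boldsymbol{I},\alpha\boldsymbol{I})$. *)

theory Defs
  imports "HOL-Analysis.Analysis" "HOL-Library.Landau_Symbols"
begin

type_synonym 'n params = "(real^'n^'n) \<times> (real^'n^'n)"

definition Wmat :: "'n::finite params \<Rightarrow> real^'n^'n" where
  "Wmat \<theta> = fst \<theta> ** transpose (fst \<theta>) - snd \<theta> ** transpose (snd \<theta>)"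

definition frob_sq :: "real^'n::finite^'n \<Rightarrow> real" where
  "frob_sq A = (\<Sum>i\<in>UNIV. \<Sum>j\<in>UNIV. (A $ i $ j)^2)"

text \<open>Loss: the training set consists of exactly the observed entries Omega (n = card Omega).\<close>
definition loss :: "real^'n::finite^'n \<Rightarrow> ('n \<times> 'n) set \<Rightarrow> real \<Rightarrow> 'n params \<Rightarrow> real" where
  "loss Xs \<Omega> lam \<theta> =
     (1 / real (card \<Omega>)) * (\<Sum>(i,j)\<in>\<Omega>. (Wmat \<theta> $ i $ j - Xs $ i $ j)^2)
     + lam / 2 * (frob_sq (fst \<theta>) + frob_sq (snd \<theta>))"

definition is_gradient_flow :: "('a::euclidean_space \<Rightarrow> real) \<Rightarrow> 'a \<Rightarrow> (real \<Rightarrow> 'a) \<Rightarrow> bool" where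
  "is_gradient_flow L \<theta>0 \<theta> \<longleftrightarrow>
     \<theta> 0 = \<theta>0 \<and>
     (\<forall>t\<ge>0. \<exists>g. (L has_derivative (\<lambda>h. g \<bullet> h)) (at (\<theta> t)) \<and>
                  (\<theta> has_vector_derivative (- g)) (at t within {0..}))"

end

theory Submission
  imports Defs "HOL-Real_Asymp.Real_Asymp"
begin


type_synonym 'n mat = "real^'n^'n"

lemma mm_entry: "((A::real^'n::finite^'m) ** (B::real^'k^'n)) $ i $ j = (\<Sum>k\<in>UNIV. A$i$k * B$k$j)"
  by (simp add: matrix_matrix_mult_def)

lemma tr_entry: "transpose (A::real^'n::finite^'m::finite) $ i $ j = A $ j $ i"
  by (simp add: transpose_def)

lemma inner_mat: "inner (A::real^'n::finite^'m::finite) B = (\<Sum>i\<in>UNIV. \<Sum>j\<in>UNIV. A$i$j * B$i$j)"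
  by (simp add: inner_vec_def)

lemma mm_add_r: "((A::real^'n::finite^'m) + B) ** (C::real^'k^'n) = A ** C + B ** C"
  by (simp add: vec_eq_iff mm_entry algebra_simps sum.distrib)
lemma mm_add_l: "(A::real^'n::finite^'m) ** ((B::real^'k^'n) + C) = A ** B + A ** C"
  by (simp add: vec_eq_iff mm_entry algebra_simps sum.distrib)
lemma mm_diff_r: "((A::real^'n::finite^'m) - B) ** (C::real^'k^'n) = A ** C - B ** C"
  by (simp add: vec_eq_iff mm_entry algebra_simps sum_subtractf)
lemma mm_diff_l: "(A::real^'n::finite^'m) ** ((B::real^'k^'n) - C) = A ** B - A ** C"
  by (simp add: vec_eq_iff mm_entry algebra_simps sum_subtractf)
lemma mm_neg_l: "(- (A::real^'n::finite^'m)) ** (B::real^'k^'n) = - (A ** B)"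
  by (simp add: vec_eq_iff mm_entry sum_negf)
lemma mm_neg_r: "(A::real^'n::finite^'m) ** (- (B::real^'k^'n)) = - (A ** B)"
  by (simp add: vec_eq_iff mm_entry sum_negf)
lemma mm_scale_l: "(c *\<^sub>R (A::real^'n::finite^'m)) ** (B::real^'k^'n) = c *\<^sub>R (A ** B)"
  by (simp add: vec_eq_iff mm_entry sum_distrib_left algebra_simps)
lemma mm_scale_r: "(A::real^'n::finite^'m) ** (c *\<^sub>R (B::real^'k^'n)) = c *\<^sub>R (A ** B)"
  by (simp add: vec_eq_iff mm_entry sum_distrib_left algebra_simps)
lemma tr_add: "transpose ((A::real^'n::finite^'m::finite) + B) = transpose A + transpose B"
  by (simp add: vec_eq_iff tr_entry)
lemma tr_diff: "transpose ((A::real^'n::finite^'m::finite) - B) = transpose A - transpose B"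
  by (simp add: vec_eq_iff tr_entry)
lemma tr_neg: "transpose (- (A::real^'n::finite^'m::finite)) = - transpose A"
  by (simp add: vec_eq_iff tr_entry)
lemma tr_scale: "transpose (c *\<^sub>R (A::real^'n::finite^'m::finite)) = c *\<^sub>R transpose A"
  by (simp add: vec_eq_iff tr_entry)
lemma tr_mm: "transpose ((A::real^'n::finite^'m::finite) ** (B::real^'k::finite^'n)) = transpose B ** transpose A"
  by (rule matrix_transpose_mul)

lemma two_times_mat: "2 * (M::real^'n::finite^'m::finite) = (2::real) *\<^sub>R M"
  by (simp add: vec_eq_iff)

lemma bilinear_mm: "bilinear ((**) :: real^'n::finite^'m::finite \<Rightarrow> real^'k::finite^'n \<Rightarrow> real^'k^'m)"
  unfolding bilinear_def
  by (auto intro!: linearI simp: mm_add_l mm_add_r mm_scale_l mm_scale_r)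

lemma bb_mm: "bounded_bilinear ((**) :: real^'n::finite^'m::finite \<Rightarrow> real^'k::finite^'n \<Rightarrow> real^'k^'m)"
  using bilinear_mm bilinear_conv_bounded_bilinear by blast

lemma bl_tr: "bounded_linear (transpose :: real^'n::finite^'m::finite \<Rightarrow> real^'m^'n)"
  by (auto intro!: linearI simp: tr_add tr_scale linear_conv_bounded_linear[symmetric])

lemma bl_entry: "bounded_linear (\<lambda>A::real^'n::finite^'m::finite. A $ i $ j)"
  using bounded_linear_compose[of "\<lambda>x. x $ j" "\<lambda>A. A $ i", OF bounded_linear_vec_nth bounded_linear_vec_nth] .

lemma inner_mm2: "inner (A::real^'n::finite^'m::finite) ((B::real^'k::finite^'m) ** C) = inner (A ** transpose C) B"
  apply (simp add: inner_mat mm_entry tr_entry sum_distrib_left sum_distrib_right algebra_simps)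
  apply (rule sum.cong, simp)
  apply (subst sum.swap) apply simp
  done

lemma inner_tr: "inner (A::real^'n::finite^'m::finite) (transpose B) = inner (transpose A) B"
  by (simp add: inner_mat tr_entry; subst sum.swap; simp)

lemma inner_mm1: "inner (A::real^'n::finite^'m::finite) ((B::real^'k::finite^'m) ** C) = inner (transpose B ** A) C"
proof -
  have "inner A (B ** C) = inner (transpose A) (transpose (B ** C))"
    using inner_tr[of "transpose A" "B ** C"] by simp
  also have "\<dots> = inner (transpose A) (transpose C ** transpose B)" by (simp add: tr_mm)
  also have "\<dots> = inner (transpose A ** B) (transpose C)" by (simp add: inner_mm2)
  also have "\<dots> = inner (transpose (transpose A ** B)) C" by (simp add: inner_tr)
  also have "\<dots> = inner (transpose B ** A) C" by (simp add: tr_mm)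
  finally show ?thesis .
qed

lemma inner_self_mat: "inner (A::real^'n::finite^'m::finite) A = (\<Sum>i\<in>UNIV. \<Sum>j\<in>UNIV. (A$i$j)^2)"
  by (simp add: inner_mat power2_eq_square)

lemma norm_sq_vec: "(norm (x::real^'n::finite))^2 = (\<Sum>i\<in>UNIV. (x$i)^2)"
  by (simp add: norm_vec_def L2_set_def sum_nonneg)

lemma norm_mm: "norm ((A::real^'n::finite^'m::finite) ** (B::real^'k::finite^'n)) \<le> norm A * norm B"
proof -
  have e: "\<And>i j. (A ** B) $ i $ j = inner (A $ i) (column j B)"
    by (simp add: mm_entry inner_vec_def column_def)
  have "(norm (A ** B))^2 = (\<Sum>i\<in>UNIV. \<Sum>j\<in>UNIV. (inner (A $ i) (column j B))^2)"
    by (simp add: power2_norm_eq_inner inner_self_mat e)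
  also have "\<dots> \<le> (\<Sum>i\<in>UNIV. \<Sum>j\<in>UNIV. (norm (A $ i))^2 * (norm (column j B))^2)"
  proof (intro sum_mono)
    fix i j
    have "\<bar>inner (A $ i) (column j B)\<bar> \<le> norm (A $ i) * norm (column j B)"
      by (rule Cauchy_Schwarz_ineq2)
    then have "(inner (A $ i) (column j B))^2 \<le> (norm (A $ i) * norm (column j B))^2"
      by (metis abs_ge_zero power2_abs power_mono)
    then show "(inner (A $ i) (column j B))^2 \<le> (norm (A $ i))^2 * (norm (column j B))^2"
      by (simp add: power_mult_distrib)
  qed
  also have "\<dots> = (\<Sum>i\<in>UNIV. (norm (A $ i))^2) * (\<Sum>j\<in>UNIV. (norm (column j B))^2)"
    by (simp add: sum_product)
  also have "\<dots> = (norm A)^2 * (norm B)^2"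
  proof -
    have 1: "(\<Sum>i\<in>UNIV. (norm (A $ i))^2) = (norm A)^2"
      by (simp add: power2_norm_eq_inner inner_vec_def)
    have "(\<Sum>j\<in>UNIV. (norm (column j B))^2) = (\<Sum>j\<in>UNIV. \<Sum>k\<in>UNIV. (B$k$j)^2)"
      by (simp add: norm_sq_vec column_def)
    also have "\<dots> = (norm B)^2"
      by (simp add: power2_norm_eq_inner inner_self_mat; subst sum.swap; simp)
    finally show ?thesis using 1 by simp
  qed
  also have "\<dots> = (norm A * norm B)^2" by (simp add: power_mult_distrib)
  finally show ?thesis
    by (meson mult_nonneg_nonneg norm_ge_zero power2_le_imp_le)
qed

lemma entry_le_norm: "\<bar>(A::real^'n::finite^'m::finite) $ i $ j\<bar> \<le> norm A"
proof -
  have "\<bar>A $ i $ j\<bar> \<le> norm (A $ i)" using component_le_norm_cart[of "A $ i" j] by simp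
  also have "\<dots> \<le> norm A" by (rule Finite_Cartesian_Product.norm_nth_le)
  finally show ?thesis .
qed


definition chi :: "('n \<times> 'n) set \<Rightarrow> 'n \<Rightarrow> 'n \<Rightarrow> real" where
  "chi \<Omega> i j = (if (i,j) \<in> \<Omega> then 1 else 0)"

definition Rm :: "real^'n::finite^'n \<Rightarrow> ('n \<times> 'n) set \<Rightarrow> real^'n^'n \<Rightarrow> real^'n^'n" where
  "Rm Xs \<Omega> W = (\<chi> i j. chi \<Omega> i j * (W$i$j - Xs$i$j))"

definition Gm :: "real^'n::finite^'n \<Rightarrow> ('n \<times> 'n) set \<Rightarrow> real^'n^'n \<Rightarrow> real^'n^'n" where
  "Gm Xs \<Omega> W = (2 / real (card \<Omega>)) *\<^sub>R (Rm Xs \<Omega> W + transpose (Rm Xs \<Omega> W))"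

definition gradL :: "real^'n::finite^'n \<Rightarrow> ('n \<times> 'n) set \<Rightarrow> real \<Rightarrow> 'n params \<Rightarrow> 'n params" where
  "gradL Xs \<Omega> lam \<theta> = (Gm Xs \<Omega> (Wmat \<theta>) ** fst \<theta> + lam *\<^sub>R fst \<theta>,
                          lam *\<^sub>R snd \<theta> - Gm Xs \<Omega> (Wmat \<theta>) ** snd \<theta>)"

lemma Wmat_deriv:
  "(Wmat has_derivative (\<lambda>h. fst h ** transpose (fst \<theta>) + fst \<theta> ** transpose (fst h)
        - (snd h ** transpose (snd \<theta>) + snd \<theta> ** transpose (snd h)))) (at \<theta>)"
proof -
  have f: "(fst has_derivative fst) (at \<theta>)" by (rule bounded_linear_imp_has_derivative[OF bounded_linear_fst])
  have s: "(snd has_derivative snd) (at \<theta>)" by (rule bounded_linear_imp_has_derivative[OF bounded_linear_snd])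
  have ft: "((\<lambda>x. transpose (fst x)) has_derivative (\<lambda>h. transpose (fst h))) (at \<theta>)"
    by (rule bounded_linear.has_derivative[OF bl_tr f])
  have st: "((\<lambda>x. transpose (snd x)) has_derivative (\<lambda>h. transpose (snd h))) (at \<theta>)"
    by (rule bounded_linear.has_derivative[OF bl_tr s])
  have 1: "((\<lambda>x. fst x ** transpose (fst x)) has_derivative
      (\<lambda>h. fst \<theta> ** transpose (fst h) + fst h ** transpose (fst \<theta>))) (at \<theta>)"
    by (rule bounded_bilinear.FDERIV[OF bb_mm f ft])
  have 2: "((\<lambda>x. snd x ** transpose (snd x)) has_derivative
      (\<lambda>h. snd \<theta> ** transpose (snd h) + snd h ** transpose (snd \<theta>))) (at \<theta>)"
    by (rule bounded_bilinear.FDERIV[OF bb_mm s st])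
  show ?thesis
    unfolding Wmat_def[abs_def]
    by (rule has_derivative_eq_rhs[OF has_derivative_diff[OF 1 2]]) (auto simp: algebra_simps)
qed

lemma sum_Omega:
  fixes f :: "'n::finite \<Rightarrow> 'n \<Rightarrow> real"
  shows "(\<Sum>p\<in>\<Omega>. f (fst p) (snd p)) = (\<Sum>i\<in>UNIV. \<Sum>j\<in>UNIV. chi \<Omega> i j * f i j)"
proof -
  have "(\<Sum>p\<in>\<Omega>. f (fst p) (snd p)) = (\<Sum>p\<in>UNIV. if p \<in> \<Omega> then f (fst p) (snd p) else 0)"
    by (simp add: sum.If_cases)
  also have "\<dots> = (\<Sum>p\<in>UNIV \<times> UNIV. chi \<Omega> (fst p) (snd p) * f (fst p) (snd p))"
    by (rule sum.cong) (auto simp: chi_def)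
  also have "\<dots> = (\<Sum>i\<in>UNIV. \<Sum>j\<in>UNIV. chi \<Omega> i j * f i j)"
    by (simp add: sum.cartesian_product split_def)
  finally show ?thesis .
qed

lemma frob_inner: "frob_sq A = inner A A"
  by (simp add: frob_sq_def inner_self_mat)

lemma loss_alt: "loss Xs \<Omega> lam = (\<lambda>\<theta>. (1 / real (card \<Omega>)) * (\<Sum>p\<in>\<Omega>. (Wmat \<theta> $ fst p $ snd p - Xs $ fst p $ snd p)^2)
     + lam / 2 * (inner (fst \<theta>) (fst \<theta>) + inner (snd \<theta>) (snd \<theta>)))"
  by (auto simp: fun_eq_iff loss_def frob_inner split_def)

lemma grad_loss:
  fixes Xs :: "real^'n::finite^'n"
  shows "(loss Xs \<Omega> lam has_derivative (\<lambda>h. inner (gradL Xs \<Omega> lam \<theta>) h)) (at \<theta>)"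
proof -
  define dW where "dW = (\<lambda>h. fst h ** transpose (fst \<theta>) + fst \<theta> ** transpose (fst h)
        - (snd h ** transpose (snd \<theta>) + snd \<theta> ** transpose (snd h)))"
  have W: "(Wmat has_derivative dW) (at \<theta>)" unfolding dW_def by (rule Wmat_deriv)
  have Wp: "((\<lambda>x. Wmat x $ fst p $ snd p - Xs $ fst p $ snd p) has_derivative (\<lambda>h. dW h $ fst p $ snd p)) (at \<theta>)" for p
    using bounded_linear.has_derivative[OF bl_entry W] by (auto intro!: derivative_eq_intros)
  have Wp2: "((\<lambda>x. (Wmat x $ fst p $ snd p - Xs $ fst p $ snd p)^2) has_derivative
     (\<lambda>h. 2 * (Wmat \<theta> $ fst p $ snd p - Xs $ fst p $ snd p) * dW h $ fst p $ snd p)) (at \<theta>)" for p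
    by (rule has_derivative_eq_rhs[OF has_derivative_power[OF Wp[of p], of 2]]) (auto simp: fun_eq_iff)
  have f: "(fst has_derivative fst) (at \<theta>)" by (rule bounded_linear_imp_has_derivative[OF bounded_linear_fst])
  have s: "(snd has_derivative snd) (at \<theta>)" by (rule bounded_linear_imp_has_derivative[OF bounded_linear_snd])
  have D: "(loss Xs \<Omega> lam has_derivative (\<lambda>h. (1 / real (card \<Omega>)) * (\<Sum>p\<in>\<Omega>. 2 * (Wmat \<theta> $ fst p $ snd p - Xs $ fst p $ snd p) * dW h $ fst p $ snd p)
     + lam / 2 * ((inner (fst \<theta>) (fst h) + inner (fst h) (fst \<theta>)) + (inner (snd \<theta>) (snd h) + inner (snd h) (snd \<theta>))))) (at \<theta>)"
    unfolding loss_alt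
    by (intro derivative_intros Wp2 f s)
  have eq: "(1 / real (card \<Omega>)) * (\<Sum>p\<in>\<Omega>. 2 * (Wmat \<theta> $ fst p $ snd p - Xs $ fst p $ snd p) * dW h $ fst p $ snd p)
     + lam / 2 * ((inner (fst \<theta>) (fst h) + inner (fst h) (fst \<theta>)) + (inner (snd \<theta>) (snd h) + inner (snd h) (snd \<theta>)))
     = inner (gradL Xs \<Omega> lam \<theta>) h" for h
  proof -
    define R where "R = Rm Xs \<Omega> (Wmat \<theta>)"
    define n where "n = real (card \<Omega>)"
    define U where "U = fst \<theta>"
    define V where "V = snd \<theta>"
    define h1 where "h1 = fst h"
    define h2 where "h2 = snd h"
    have hh: "h = (h1, h2)" by (simp add: h1_def h2_def)
    have "(\<Sum>p\<in>\<Omega>. 2 * (Wmat \<theta> $ fst p $ snd p - Xs $ fst p $ snd p) * dW h $ fst p $ snd p)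
        = 2 * inner R (dW h)"
      unfolding sum_Omega[of "\<lambda>i j. 2 * (Wmat \<theta> $ i $ j - Xs $ i $ j) * dW h $ i $ j" \<Omega>]
      by (simp add: R_def Rm_def inner_mat sum_distrib_left algebra_simps)
    also have "inner R (dW h) = inner (R ** U) h1 + inner (transpose R ** U) h1 - inner (R ** V) h2 - inner (transpose R ** V) h2"
    proof -
      have a: "inner R (h1 ** transpose U) = inner (R ** U) h1" by (simp add: inner_mm2)
      have b: "inner R (U ** transpose h1) = inner (transpose R ** U) h1"
        by (simp add: inner_mm1 inner_tr tr_mm)
      have c: "inner R (h2 ** transpose V) = inner (R ** V) h2" by (simp add: inner_mm2)
      have d: "inner R (V ** transpose h2) = inner (transpose R ** V) h2"
        by (simp add: inner_mm1 inner_tr tr_mm)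
      show ?thesis unfolding dW_def U_def[symmetric] V_def[symmetric] h1_def[symmetric] h2_def[symmetric]
        by (simp add: inner_add_right inner_diff_right a b c d)
    qed
    finally have 1: "(\<Sum>p\<in>\<Omega>. 2 * (Wmat \<theta> $ fst p $ snd p - Xs $ fst p $ snd p) * dW h $ fst p $ snd p)
       = 2 * (inner (R ** U) h1 + inner (transpose R ** U) h1 - inner (R ** V) h2 - inner (transpose R ** V) h2)" .
    show ?thesis
      unfolding 1 unfolding gradL_def Gm_def R_def[symmetric] n_def[symmetric] U_def[symmetric] V_def[symmetric]
        h1_def[symmetric] h2_def[symmetric] hh
      by (simp add: inner_add_left inner_diff_left mm_add_r mm_scale_l inner_commute algebra_simps add_divide_distrib diff_divide_distrib)
  qed
  show ?thesis using D eq by (simp add: eq)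
qed


lemma mono_deriv:
  fixes f f' :: "real \<Rightarrow> real"
  assumes "0 \<le> s"
    and d: "\<And>t. 0 \<le> t \<Longrightarrow> t \<le> s \<Longrightarrow> (f has_real_derivative f' t) (at t within {0..})"
    and le: "\<And>t. 0 \<le> t \<Longrightarrow> t \<le> s \<Longrightarrow> f' t \<le> 0"
  shows "f s \<le> f 0"
proof -
  have "\<exists>x\<in>{0..s}. f s - f 0 = (\<lambda>h. f' x * h) (s - 0)"
    apply (rule mvt_very_simple[OF assms(1)])
    apply (rule has_derivative_subset[OF d[unfolded has_field_derivative_def]])
    by auto
  then obtain x where "x \<in> {0..s}" "f s - f 0 = f' x * s" by auto
  moreover have "f' x * s \<le> 0" using le[of x] \<open>x \<in> {0..s}\<close> assms(1)
    by (simp add: mult_nonpos_nonneg)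
  ultimately show ?thesis by simp
qed

lemma gronwall:
  fixes h h' \<Gamma> \<gamma> :: "real \<Rightarrow> real"
  assumes "0 \<le> s"
    and dh: "\<And>t. 0 \<le> t \<Longrightarrow> t \<le> s \<Longrightarrow> (h has_real_derivative h' t) (at t within {0..})"
    and dG: "\<And>t. 0 \<le> t \<Longrightarrow> t \<le> s \<Longrightarrow> (\<Gamma> has_real_derivative \<gamma> t) (at t within {0..})"
    and le: "\<And>t. 0 \<le> t \<Longrightarrow> t \<le> s \<Longrightarrow> h' t \<le> \<gamma> t * h t"
  shows "h s \<le> h 0 * exp (\<Gamma> s - \<Gamma> 0)"
proof -
  have "(\<lambda>t. h t * exp (- \<Gamma> t)) s \<le> (\<lambda>t. h t * exp (- \<Gamma> t)) 0"
  proof (rule mono_deriv[OF assms(1)])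
    fix t assume t: "0 \<le> t" "t \<le> s"
    show "((\<lambda>t. h t * exp (- \<Gamma> t)) has_real_derivative (h' t - \<gamma> t * h t) * exp (- \<Gamma> t)) (at t within {0..})"
      by (rule derivative_eq_intros dh[OF t] dG[OF t] refl)+ (simp add: algebra_simps)
    show "(h' t - \<gamma> t * h t) * exp (- \<Gamma> t) \<le> 0"
      using le[OF t] by (simp add: mult_nonpos_nonneg)
  qed
  then have "h s * exp (- \<Gamma> s) * exp (\<Gamma> s) \<le> h 0 * exp (- \<Gamma> 0) * exp (\<Gamma> s)"
    by (simp add: mult_right_mono)
  then show ?thesis by (simp add: mult.assoc exp_add[symmetric] exp_diff)
qed

locale flowctx =
  fixes Xs :: "real^'n::finite^'n" and \<Omega> :: "('n \<times> 'n) set" and lam a :: real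
    and \<theta> :: "real \<Rightarrow> 'n params"
  assumes symX: "transpose Xs = Xs" and Ome: "\<Omega> \<noteq> {}" and apos: "a > 0" and lpos: "lam > 0"
    and gf: "is_gradient_flow (loss Xs \<Omega> lam) (mat a, mat a) \<theta>"
begin

definition "U t = fst (\<theta> t)"
definition "V t = snd (\<theta> t)"
definition "W t = Wmat (\<theta> t)"
definition "G t = Gm Xs \<Omega> (W t)"
definition "Z t = (exp (lam * t) / a) *\<^sub>R U t"
definition "Y t = (exp (lam * t) / a) *\<^sub>R V t"
definition "\<beta> t = a^2 * exp (- 2 * lam * t)"

lemma theta_deriv:
  assumes "t \<ge> 0"
  shows "(\<theta> has_vector_derivative - gradL Xs \<Omega> lam (\<theta> t)) (at t within {0..})"
proof -
  obtain g where g1: "(loss Xs \<Omega> lam has_derivative (\<lambda>h. g \<bullet> h)) (at (\<theta> t))"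
    and g2: "(\<theta> has_vector_derivative (- g)) (at t within {0..})"
    using gf assms unfolding is_gradient_flow_def by blast
  have "(\<lambda>h. g \<bullet> h) = (\<lambda>h. gradL Xs \<Omega> lam (\<theta> t) \<bullet> h)"
    by (rule has_derivative_unique[OF g1 grad_loss])
  then have "g \<bullet> (g - gradL Xs \<Omega> lam (\<theta> t)) = gradL Xs \<Omega> lam (\<theta> t) \<bullet> (g - gradL Xs \<Omega> lam (\<theta> t))"
    by metis
  then have "(g - gradL Xs \<Omega> lam (\<theta> t)) \<bullet> (g - gradL Xs \<Omega> lam (\<theta> t)) = 0"
    by (simp add: inner_diff_left)
  then have "g = gradL Xs \<Omega> lam (\<theta> t)" by simp
  then show ?thesis using g2 by simp
qed

lemma U_deriv: "t \<ge> 0 \<Longrightarrow> (U has_vector_derivative - (G t ** U t + lam *\<^sub>R U t)) (at t within {0..})"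
  using bounded_linear.has_vector_derivative[OF bounded_linear_fst theta_deriv]
  by (simp add: U_def[abs_def] G_def W_def gradL_def)

lemma V_deriv: "t \<ge> 0 \<Longrightarrow> (V has_vector_derivative (G t ** V t - lam *\<^sub>R V t)) (at t within {0..})"
  using bounded_linear.has_vector_derivative[OF bounded_linear_snd theta_deriv]
  by (simp add: V_def[abs_def] G_def W_def gradL_def)

lemma e_deriv: "((\<lambda>t. exp (lam * t) / a) has_real_derivative (lam * (exp (lam * t) / a))) (at t within S)"
  by (rule derivative_eq_intros refl)+ (use apos in \<open>auto simp: field_simps\<close>)

lemma Z_deriv: "t \<ge> 0 \<Longrightarrow> (Z has_vector_derivative - (G t ** Z t)) (at t within {0..})"
  unfolding Z_def[abs_def]
  by (rule has_vector_derivative_eq_rhs[OF has_vector_derivative_scaleR[OF e_deriv U_deriv]])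
     (simp_all add: mm_scale_r algebra_simps scaleR_add_right)

lemma Y_deriv: "t \<ge> 0 \<Longrightarrow> (Y has_vector_derivative (G t ** Y t)) (at t within {0..})"
  unfolding Y_def[abs_def]
  by (rule has_vector_derivative_eq_rhs[OF has_vector_derivative_scaleR[OF e_deriv V_deriv]])
     (simp_all add: mm_scale_r algebra_simps scaleR_diff_right)

lemma G_sym: "transpose (G t) = G t"
  by (simp add: G_def Gm_def tr_scale tr_add add.commute)

lemma U0: "U 0 = mat a" and V0: "V 0 = mat a"
  using gf by (auto simp: is_gradient_flow_def U_def V_def)

lemma Z0: "Z 0 = mat 1" and Y0: "Y 0 = mat 1"
  using apos by (auto simp: Z_def Y_def U0 V0 vec_eq_iff mat_def)

lemma ZY_const: "t \<ge> 0 \<Longrightarrow> transpose (Z t) ** Y t = mat 1"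
proof -
  have "\<exists>c. \<forall>x\<in>{0..}. transpose (Z x) ** Y x = c"
  proof (rule has_derivative_zero_constant)
    fix x :: real assume x: "x \<in> {0..}"
    have zt: "((\<lambda>t. transpose (Z t)) has_vector_derivative transpose (- (G x ** Z x))) (at x within {0..})"
      using bounded_linear.has_vector_derivative[OF bl_tr Z_deriv] x by auto
    have "((\<lambda>t. transpose (Z t) ** Y t) has_vector_derivative
        (transpose (Z x) ** (G x ** Y x) + transpose (- (G x ** Z x)) ** Y x)) (at x within {0..})"
      by (rule bounded_bilinear.has_vector_derivative[OF bb_mm zt Y_deriv]) (use x in auto)
    moreover have "transpose (Z x) ** (G x ** Y x) + transpose (- (G x ** Z x)) ** Y x = 0"
      by (simp add: tr_neg tr_mm G_sym mm_neg_l matrix_mul_assoc)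
    ultimately show "((\<lambda>t. transpose (Z t) ** Y t) has_derivative (\<lambda>h. 0)) (at x within {0..})"
      by (simp add: has_vector_derivative_def)
  qed (simp add: convex_real_interval)
  then obtain c where "\<forall>x\<in>{0..}. transpose (Z x) ** Y x = c" by blast
  moreover have "transpose (Z 0) ** Y 0 = mat 1" by (simp add: Z0 Y0)
  ultimately show "t \<ge> 0 \<Longrightarrow> transpose (Z t) ** Y t = mat 1" by force
qed

lemma ZY_inv: assumes "t \<ge> 0" shows "Z t ** transpose (Y t) = mat 1" "Y t ** transpose (Z t) = mat 1"
proof -
  have "Y t ** transpose (Z t) = mat 1"
    using ZY_const[OF assms] matrix_left_right_inverse by blast
  then show "Y t ** transpose (Z t) = mat 1" "Z t ** transpose (Y t) = mat 1"
    using tr_mm[of "Y t" "transpose (Z t)"] by auto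
qed

end


context flowctx begin

definition "n = real (card \<Omega>)"
definition "mm i j = chi \<Omega> i j + chi \<Omega> j i"
definition "Phi t = (\<Sum>i\<in>UNIV. \<Sum>j\<in>UNIV. mm i j * (W t $ i $ j - Xs $ i $ j)^2)"
definition "KK = (\<Sum>i\<in>UNIV. \<Sum>j\<in>UNIV. mm i j * (Xs $ i $ j)^2)"
definition "P t = U t ** transpose (U t) + V t ** transpose (V t)"
definition "Q t = Z t - Y t"
definition "N t = Z t ** transpose (Z t) - Y t ** transpose (Y t)"
definition "EE t = inner (Z t) (Z t) + inner (Y t) (Y t)"
definition "qq t = inner (Q t) (Q t)"

lemma n_pos: "n > 0"
  using Ome by (simp add: n_def card_gt_0_iff)

lemma mm_props: "0 \<le> mm i j" "mm i j \<le> mm i j ^ 2" "mm i j ^ 2 \<le> 2 * mm i j" "mm i j = mm j i"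
  by (auto simp: mm_def chi_def)

lemma W_sym: "transpose (W t) = W t"
  by (simp add: W_def Wmat_def tr_diff tr_mm)

lemma Xs_ent: "Xs $ j $ i = Xs $ i $ j"
  using symX by (metis tr_entry)

lemma W_ent: "W t $ j $ i = W t $ i $ j"
  using W_sym by (metis tr_entry)

lemma G_ent: "G t $ i $ j = (2 / n) * mm i j * (W t $ i $ j - Xs $ i $ j)"
  by (simp add: G_def Gm_def Rm_def tr_entry n_def mm_def W_ent Xs_ent algebra_simps)

lemma G_off: "chi \<Omega> i j = 0 \<Longrightarrow> chi \<Omega> j i = 0 \<Longrightarrow> G t $ i $ j = 0"
  by (simp add: G_ent mm_def)

lemma W_UV: "W t = U t ** transpose (U t) - V t ** transpose (V t)"
  by (simp add: W_def Wmat_def U_def V_def)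

lemma W_deriv: assumes "t \<ge> 0"
  shows "(W has_vector_derivative (- (G t ** P t + P t ** G t) - (2 * lam) *\<^sub>R W t)) (at t within {0..})"
proof -
  have ut: "((\<lambda>t. transpose (U t)) has_vector_derivative transpose (- (G t ** U t + lam *\<^sub>R U t))) (at t within {0..})"
    using bounded_linear.has_vector_derivative[OF bl_tr U_deriv[OF assms]] .
  have vt: "((\<lambda>t. transpose (V t)) has_vector_derivative transpose (G t ** V t - lam *\<^sub>R V t)) (at t within {0..})"
    using bounded_linear.has_vector_derivative[OF bl_tr V_deriv[OF assms]] .
  have 1: "((\<lambda>t. U t ** transpose (U t)) has_vector_derivative
     (U t ** transpose (- (G t ** U t + lam *\<^sub>R U t)) + (- (G t ** U t + lam *\<^sub>R U t)) ** transpose (U t))) (at t within {0..})"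
    by (rule bounded_bilinear.has_vector_derivative[OF bb_mm U_deriv[OF assms] ut])
  have 2: "((\<lambda>t. V t ** transpose (V t)) has_vector_derivative
     (V t ** transpose (G t ** V t - lam *\<^sub>R V t) + (G t ** V t - lam *\<^sub>R V t) ** transpose (V t))) (at t within {0..})"
    by (rule bounded_bilinear.has_vector_derivative[OF bb_mm V_deriv[OF assms] vt])
  show ?thesis
    unfolding W_UV[abs_def]
    apply (rule has_vector_derivative_eq_rhs[OF has_vector_derivative_diff[OF 1 2]])
    apply (simp add: P_def W_UV tr_add tr_diff tr_neg tr_scale tr_mm G_sym mm_add_l mm_add_r mm_diff_l mm_diff_r
        mm_neg_l mm_neg_r mm_scale_l mm_scale_r matrix_mul_assoc algebra_simps scaleR_diff_right two_times_mat)
    done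
qed

lemma U_Z: "U t = (a * exp (- lam * t)) *\<^sub>R Z t"
  using apos by (simp add: Z_def exp_minus field_simps)
lemma V_Y: "V t = (a * exp (- lam * t)) *\<^sub>R Y t"
  using apos by (simp add: Y_def exp_minus field_simps)

lemma beta_sq: "(a * exp (- (lam * t))) * (a * exp (- (lam * t))) = \<beta> t"
  by (simp add: \<beta>_def power2_eq_square exp_add[symmetric] algebra_simps)

lemma ZZYY: "t \<ge> 0 \<Longrightarrow> Z t ** transpose (Z t) + Y t ** transpose (Y t) = 2 *\<^sub>R mat 1 + Q t ** transpose (Q t)"
  using ZY_inv[of t]
  by (simp add: Q_def tr_diff mm_diff_l mm_diff_r scaleR_2 algebra_simps)

lemma P_eq: "t \<ge> 0 \<Longrightarrow> P t = \<beta> t *\<^sub>R (2 *\<^sub>R mat 1 + Q t ** transpose (Q t))"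
  unfolding P_def U_Z V_Y
  by (simp add: tr_scale mm_scale_l mm_scale_r beta_sq ZZYY[symmetric] scaleR_add_right)

lemma W_N: "W t = \<beta> t *\<^sub>R N t"
  unfolding W_UV U_Z V_Y N_def
  by (simp add: tr_scale mm_scale_l mm_scale_r beta_sq scaleR_diff_right)

lemma beta_pos: "\<beta> t > 0" using apos by (simp add: \<beta>_def)

end


lemma norm_tr: "norm (transpose (A::real^'n::finite^'m::finite)) = norm A"
proof -
  have "inner (transpose A) (transpose A) = inner A A" by (simp add: inner_tr)
  then show ?thesis by (simp add: norm_eq_sqrt_inner)
qed

lemma inner_GA: "\<bar>inner (A::real^'n::finite^'n) (B ** C)\<bar> \<le> norm B * (norm A * norm C)"
proof -
  have "\<bar>inner A (B ** C)\<bar> \<le> norm A * norm (B ** C)" by (rule Cauchy_Schwarz_ineq2)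
  also have "\<dots> \<le> norm A * (norm B * norm C)" by (simp add: mult_left_mono norm_mm)
  finally show ?thesis by (simp add: algebra_simps)
qed

context flowctx begin

definition "Wd t = - (G t ** P t + P t ** G t) - (2 * lam) *\<^sub>R W t"
definition "Phid t = (\<Sum>i\<in>UNIV. \<Sum>j\<in>UNIV. mm i j * (2 * (W t $ i $ j - Xs $ i $ j) * Wd t $ i $ j))"

lemma W_ent_deriv: "t \<ge> 0 \<Longrightarrow> ((\<lambda>t. W t $ i $ j) has_real_derivative Wd t $ i $ j) (at t within {0..})"
  unfolding has_real_derivative_iff_has_vector_derivative Wd_def
  by (rule bounded_linear.has_vector_derivative[OF bl_entry W_deriv])

lemma Phi_deriv: "t \<ge> 0 \<Longrightarrow> (Phi has_real_derivative Phid t) (at t within {0..})"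
  unfolding Phi_def[abs_def] Phid_def
  by (rule derivative_eq_intros W_ent_deriv refl | assumption)+ (simp add: algebra_simps)

lemma iGG_ge: "inner (G t) (G t) \<ge> (4 / n^2) * Phi t"
proof -
  have "(4 / n^2) * Phi t = (\<Sum>i\<in>UNIV. \<Sum>j\<in>UNIV. (4 / n^2) * mm i j * (W t $ i $ j - Xs $ i $ j)^2)"
    by (simp add: Phi_def sum_distrib_left algebra_simps)
  also have "\<dots> \<le> (\<Sum>i\<in>UNIV. \<Sum>j\<in>UNIV. G t $ i $ j * G t $ i $ j)"
  proof (intro sum_mono)
    fix i j
    have "(4 / n^2) * mm i j * (W t $ i $ j - Xs $ i $ j)^2 \<le> (4 / n^2) * mm i j ^ 2 * (W t $ i $ j - Xs $ i $ j)^2"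
      using mm_props(2)[of i j] by (intro mult_right_mono mult_left_mono) auto
    also have "\<dots> = G t $ i $ j * G t $ i $ j"
      by (simp add: G_ent power2_eq_square field_simps)
    finally show "(4 / n^2) * mm i j * (W t $ i $ j - Xs $ i $ j)^2 \<le> G t $ i $ j * G t $ i $ j" .
  qed
  finally show ?thesis by (simp add: inner_mat)
qed

lemma iGG_le: "inner (G t) (G t) \<le> (8 / n^2) * Phi t"
proof -
  have "(\<Sum>i\<in>UNIV. \<Sum>j\<in>UNIV. G t $ i $ j * G t $ i $ j) \<le>
     (\<Sum>i\<in>UNIV. \<Sum>j\<in>UNIV. (8 / n^2) * mm i j * (W t $ i $ j - Xs $ i $ j)^2)"
  proof (intro sum_mono)
    fix i j
    have "G t $ i $ j * G t $ i $ j = (4 / n^2) * mm i j ^ 2 * (W t $ i $ j - Xs $ i $ j)^2"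
      by (simp add: G_ent power2_eq_square field_simps)
    also have "\<dots> \<le> (4 / n^2) * (2 * mm i j) * (W t $ i $ j - Xs $ i $ j)^2"
      using mm_props(3)[of i j] by (intro mult_right_mono mult_left_mono) auto
    finally show "G t $ i $ j * G t $ i $ j \<le> (8 / n^2) * mm i j * (W t $ i $ j - Xs $ i $ j)^2" by simp
  qed
  also have "\<dots> = (8 / n^2) * Phi t"
    by (simp add: Phi_def sum_distrib_left algebra_simps)
  finally show ?thesis by (simp add: inner_mat)
qed

lemma Phi_nonneg: "Phi t \<ge> 0"
  unfolding Phi_def using mm_props(1) by (intro sum_nonneg) auto

lemma KK_nonneg: "KK \<ge> 0"
  unfolding KK_def using mm_props(1) by (intro sum_nonneg) auto

lemma normG: "norm (G t) \<le> sqrt 8 / n * sqrt (Phi t)"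
proof -
  have "norm (G t) = sqrt (inner (G t) (G t))" by (simp add: norm_eq_sqrt_inner)
  also have "\<dots> \<le> sqrt ((8 / n^2) * Phi t)" using iGG_le by simp
  also have "\<dots> = sqrt 8 / n * sqrt (Phi t)" using n_pos by (simp add: real_sqrt_mult real_sqrt_divide)
  finally show ?thesis .
qed

lemma Phi_ineq: assumes t: "t \<ge> 0"
  shows "Phid t \<le> - (8 * \<beta> t / n) * Phi t + n * lam^2 * KK / (2 * \<beta> t)"
proof -
  define b where "b = \<beta> t"
  have bpos: "b > 0" using beta_pos by (simp add: b_def)
  have s1: "Phid t = n * inner (G t) (Wd t)"
    unfolding Phid_def inner_mat sum_distrib_left
    using n_pos by (intro sum.cong refl) (simp add: G_ent field_simps)
  have s2: "inner (G t) (Wd t) = - inner (G t) (G t ** P t) - inner (G t) (P t ** G t) - 2 * lam * inner (G t) (W t)"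
    by (simp only: Wd_def inner_diff_right inner_add_right inner_minus_right inner_scaleR_right)
  have s3: "inner (G t) (G t ** P t) \<ge> 2 * b * inner (G t) (G t)"
  proof -
    have "inner (G t) (G t ** P t) = b * (2 * inner (G t) (G t) + inner (G t) ((G t ** Q t) ** transpose (Q t)))"
      by (simp add: P_eq[OF t] b_def mm_scale_r mm_add_l matrix_mul_assoc inner_add_right inner_scaleR_right)
    also have "inner (G t) ((G t ** Q t) ** transpose (Q t)) = inner (G t ** Q t) (G t ** Q t)"
      by (simp add: inner_mm2)
    finally show ?thesis using bpos by (simp add: algebra_simps)
  qed
  have s4: "inner (G t) (P t ** G t) \<ge> 2 * b * inner (G t) (G t)"
  proof -
    have "inner (G t) (P t ** G t) = b * (2 * inner (G t) (G t) + inner (G t) (Q t ** (transpose (Q t) ** G t)))"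
      by (simp add: P_eq[OF t] b_def mm_scale_l mm_add_r matrix_mul_assoc inner_add_right inner_scaleR_right)
    also have "inner (G t) (Q t ** (transpose (Q t) ** G t)) = inner (transpose (Q t) ** G t) (transpose (Q t) ** G t)"
      by (simp add: inner_mm1)
    finally show ?thesis using bpos by (simp add: algebra_simps)
  qed
  have s6: "n * inner (G t) (W t) = (\<Sum>i\<in>UNIV. \<Sum>j\<in>UNIV. 2 * mm i j * (W t $ i $ j - Xs $ i $ j) * W t $ i $ j)"
    unfolding inner_mat sum_distrib_left
    using n_pos by (intro sum.cong refl) (simp add: G_ent field_simps)
  have s7: "(\<Sum>i\<in>UNIV. \<Sum>j\<in>UNIV. - 2 * lam * (2 * mm i j * (W t $ i $ j - Xs $ i $ j) * W t $ i $ j))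
      \<le> (\<Sum>i\<in>UNIV. \<Sum>j\<in>UNIV. (8 * b / n) * (mm i j * (W t $ i $ j - Xs $ i $ j)^2) + (n * lam^2 / (2 * b)) * (mm i j * (Xs $ i $ j)^2))"
  proof (intro sum_mono)
    fix i j
    define d where "d = W t $ i $ j - Xs $ i $ j"
    define x where "x = Xs $ i $ j"
    have w: "W t $ i $ j = d + x" by (simp add: d_def x_def)
    have key: "- 4 * lam * (d * (d + x)) \<le> (8 * b / n) * d^2 + (n * lam^2 / (2 * b)) * x^2"
    proof -
      have "0 \<le> (8 * b / n) * (d + n * lam * x / (4 * b))^2"
        using bpos n_pos by simp
      also have "\<dots> = (8 * b / n) * d^2 + 4 * lam * d * x + (n * lam^2 / (2 * b)) * x^2"
        using bpos n_pos by (simp add: power2_eq_square field_simps)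
      finally have "0 \<le> (8 * b / n) * d^2 + 4 * lam * d * x + (n * lam^2 / (2 * b)) * x^2" .
      moreover have "0 \<le> 4 * lam * d^2" using lpos by simp
      ultimately show ?thesis by (simp add: power2_eq_square algebra_simps)
    qed
    have "mm i j * (- 4 * lam * (d * (d + x))) \<le> mm i j * ((8 * b / n) * d^2 + (n * lam^2 / (2 * b)) * x^2)"
      using key mm_props(1)[of i j] by (rule mult_left_mono)
    then show "- 2 * lam * (2 * mm i j * (W t $ i $ j - Xs $ i $ j) * W t $ i $ j)
        \<le> (8 * b / n) * (mm i j * (W t $ i $ j - Xs $ i $ j)^2) + (n * lam^2 / (2 * b)) * (mm i j * (Xs $ i $ j)^2)"
      unfolding w d_def[symmetric] x_def[symmetric] by (simp add: algebra_simps)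
  qed
  have s7': "- 2 * lam * (n * inner (G t) (W t)) \<le> (8 * b / n) * Phi t + (n * lam^2 / (2 * b)) * KK"
  proof -
    have e1: "- 2 * lam * (n * inner (G t) (W t)) = (\<Sum>i\<in>UNIV. \<Sum>j\<in>UNIV. - 2 * lam * (2 * mm i j * (W t $ i $ j - Xs $ i $ j) * W t $ i $ j))"
      unfolding s6 by (simp add: sum_distrib_left)
    have e2: "(\<Sum>i\<in>UNIV. \<Sum>j\<in>UNIV. (8 * b / n) * (mm i j * (W t $ i $ j - Xs $ i $ j)^2) + (n * lam^2 / (2 * b)) * (mm i j * (Xs $ i $ j)^2))
       = (8 * b / n) * Phi t + (n * lam^2 / (2 * b)) * KK"
      by (simp add: Phi_def KK_def sum.distrib sum_distrib_left)
    show ?thesis using s7 unfolding e1 e2 .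
  qed
  have GG: "inner (G t) (G t) \<ge> (4 / n^2) * Phi t" by (rule iGG_ge)
  have "Phid t = n * (- inner (G t) (G t ** P t) - inner (G t) (P t ** G t)) + (- 2 * lam * (n * inner (G t) (W t)))"
    by (simp add: s1 s2 algebra_simps)
  also have "\<dots> \<le> n * (- 4 * b * inner (G t) (G t)) + ((8 * b / n) * Phi t + (n * lam^2 / (2 * b)) * KK)"
    using s3 s4 s7' n_pos by (intro add_mono mult_left_mono) auto
  also have "n * (- 4 * b * inner (G t) (G t)) \<le> n * (- 4 * b * ((4 / n^2) * Phi t))"
  proof -
    have "4 * b * ((4 / n^2) * Phi t) \<le> 4 * b * inner (G t) (G t)" using GG bpos by (intro mult_left_mono) auto
    then have "- 4 * b * inner (G t) (G t) \<le> - 4 * b * ((4 / n^2) * Phi t)" by linarith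
    from mult_left_mono[OF this, of n] n_pos show ?thesis by simp
  qed
  finally have "Phid t \<le> n * (- 4 * b * ((4 / n^2) * Phi t)) + ((8 * b / n) * Phi t + (n * lam^2 / (2 * b)) * KK)"
    by simp
  also have "\<dots> = - (8 * b / n) * Phi t + n * lam^2 * KK / (2 * b)"
    using n_pos by (simp add: power2_eq_square field_simps)
  finally show ?thesis by (simp add: b_def)
qed

end


context flowctx begin

lemma EE_deriv: "t \<ge> 0 \<Longrightarrow> (EE has_real_derivative (2 * inner (Z t) (- (G t ** Z t)) + 2 * inner (Y t) (G t ** Y t))) (at t within {0..})"
  unfolding has_real_derivative_iff_has_vector_derivative EE_def[abs_def]
  apply (rule has_vector_derivative_eq_rhs[OF has_vector_derivative_add[OF
      bounded_bilinear.has_vector_derivative[OF bounded_bilinear_inner Z_deriv Z_deriv]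
      bounded_bilinear.has_vector_derivative[OF bounded_bilinear_inner Y_deriv Y_deriv]]])
  by (auto simp: inner_commute)

lemma inner_self_G: "\<bar>inner (A::real^'n^'n) (G t ** A)\<bar> \<le> norm (G t) * inner A A"
  using inner_GA[of A "G t" A] by (simp add: dot_square_norm power2_eq_square)

lemma EE_d_le: "2 * inner (Z t) (- (G t ** Z t)) + 2 * inner (Y t) (G t ** Y t) \<le> 2 * norm (G t) * EE t"
  using inner_self_G[of "Z t" t] inner_self_G[of "Y t" t]
  by (simp add: EE_def algebra_simps abs_le_iff)

lemma EE_nonneg: "EE t \<ge> 0" by (simp add: EE_def)

lemma EE0: "EE 0 = 2 * real CARD('n)"
proof -
  have "inner (mat 1 :: real^'n^'n) (mat 1) = real CARD('n)"
    by (simp add: inner_mat mat_def if_distrib sum.If_cases)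
  then show ?thesis by (simp add: EE_def Z0 Y0)
qed

lemma Q_deriv: "t \<ge> 0 \<Longrightarrow> (Q has_vector_derivative (- (G t ** Z t) - G t ** Y t)) (at t within {0..})"
  unfolding Q_def[abs_def] by (rule has_vector_derivative_diff[OF Z_deriv Y_deriv])

lemma qq_deriv: "t \<ge> 0 \<Longrightarrow> (qq has_real_derivative (2 * inner (Q t) (- (G t ** Z t) - G t ** Y t))) (at t within {0..})"
  unfolding has_real_derivative_iff_has_vector_derivative qq_def[abs_def]
  apply (rule has_vector_derivative_eq_rhs[OF
      bounded_bilinear.has_vector_derivative[OF bounded_bilinear_inner Q_deriv Q_deriv]])
  by (auto simp: inner_commute)

lemma qq_d_le: "2 * inner (Q t) (- (G t ** Z t) - G t ** Y t) \<le> 2 * norm (G t) * EE t"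
proof -
  have e: "- (G t ** Z t) - G t ** Y t = - (G t ** (Z t + Y t))" by (simp add: mm_add_l)
  have 1: "\<bar>inner (Q t) (G t ** (Z t + Y t))\<bar> \<le> norm (G t) * (norm (Q t) * norm (Z t + Y t))"
    by (rule inner_GA)
  have 2: "norm (Q t) * norm (Z t + Y t) \<le> ((norm (Q t))^2 + (norm (Z t + Y t))^2) / 2"
    using sum_squares_bound[of "norm (Q t)" "norm (Z t + Y t)"] by simp
  have 3: "(norm (Q t))^2 + (norm (Z t + Y t))^2 = 2 * EE t"
  proof -
    have "(norm (Q t))^2 + (norm (Z t + Y t))^2 = inner (Z t - Y t) (Z t - Y t) + inner (Z t + Y t) (Z t + Y t)"
      by (simp only: power2_norm_eq_inner Q_def)
    also have "\<dots> = 2 * inner (Z t) (Z t) + 2 * inner (Y t) (Y t)"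
      by (simp only: inner_add_left inner_add_right inner_diff_left inner_diff_right inner_commute[of "Y t" "Z t"])
    finally show ?thesis by (simp add: EE_def)
  qed
  have 4: "\<bar>inner (Q t) (G t ** (Z t + Y t))\<bar> \<le> norm (G t) * EE t"
    using 1 2 3 mult_left_mono[OF 2 norm_ge_zero[of "G t"]] by simp
  show ?thesis unfolding e inner_minus_right using 4 by linarith
qed

lemma qq0: "qq 0 = 0" by (simp add: qq_def Q_def Z0 Y0)
lemma qq_nonneg: "qq t \<ge> 0" by (simp add: qq_def)

definition "Nd t = (Z t ** transpose (- (G t ** Z t)) + (- (G t ** Z t)) ** transpose (Z t))
     - (Y t ** transpose (G t ** Y t) + (G t ** Y t) ** transpose (Y t))"

lemma N_deriv: assumes "t \<ge> 0" shows "(N has_vector_derivative Nd t) (at t within {0..})"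
proof -
  have zt: "((\<lambda>t. transpose (Z t)) has_vector_derivative transpose (- (G t ** Z t))) (at t within {0..})"
    using bounded_linear.has_vector_derivative[OF bl_tr Z_deriv[OF assms]] .
  have yt: "((\<lambda>t. transpose (Y t)) has_vector_derivative transpose (G t ** Y t)) (at t within {0..})"
    using bounded_linear.has_vector_derivative[OF bl_tr Y_deriv[OF assms]] .
  show ?thesis unfolding N_def[abs_def] Nd_def
    by (rule has_vector_derivative_diff[OF
      bounded_bilinear.has_vector_derivative[OF bb_mm Z_deriv[OF assms] zt]
      bounded_bilinear.has_vector_derivative[OF bb_mm Y_deriv[OF assms] yt]])
qed

lemma Nd_eq: assumes "t \<ge> 0"
  shows "Nd t = - ((4::real) *\<^sub>R G t + (Q t ** transpose (Q t)) ** G t + G t ** (Q t ** transpose (Q t)))"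
proof -
  define A where "A = Z t ** transpose (Z t)"
  define B where "B = Y t ** transpose (Y t)"
  define C where "C = Q t ** transpose (Q t)"
  have h1: "Nd t = - (A ** G t) - G t ** A - (B ** G t + G t ** B)"
    by (simp add: A_def B_def Nd_def tr_neg tr_mm G_sym mm_neg_l mm_neg_r matrix_mul_assoc)
  have h2: "A + B = 2 *\<^sub>R mat 1 + C" unfolding A_def B_def C_def by (rule ZZYY[OF assms])
  have h3: "- (A ** G t) - G t ** A - (B ** G t + G t ** B) = - ((A + B) ** G t + G t ** (A + B))"
    by (simp add: mm_add_l mm_add_r algebra_simps)
  have h4: "(A + B) ** G t + G t ** (A + B) = (4::real) *\<^sub>R G t + C ** G t + G t ** C"
    unfolding h2 by (simp add: mm_add_l mm_add_r mm_scale_l mm_scale_r algebra_simps scaleR_left_distrib[symmetric])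
  show ?thesis unfolding h1 h3 h4 C_def ..
qed

lemma N_ent_deriv: "t \<ge> 0 \<Longrightarrow> ((\<lambda>t. N t $ i $ j) has_real_derivative Nd t $ i $ j) (at t within {0..})"
  unfolding has_real_derivative_iff_has_vector_derivative
  by (rule bounded_linear.has_vector_derivative[OF bl_entry N_deriv])

lemma Nd_off: assumes "t \<ge> 0" "chi \<Omega> i j = 0" "chi \<Omega> j i = 0"
  shows "\<bar>Nd t $ i $ j\<bar> \<le> 2 * norm (G t) * qq t"
proof -
  have "Nd t $ i $ j = - (((Q t ** transpose (Q t)) ** G t + G t ** (Q t ** transpose (Q t))) $ i $ j)"
    using G_off[OF assms(2,3), of t] by (simp add: Nd_eq[OF assms(1)])
  then have "\<bar>Nd t $ i $ j\<bar> \<le> norm ((Q t ** transpose (Q t)) ** G t + G t ** (Q t ** transpose (Q t)))"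
    using entry_le_norm by (metis abs_minus_cancel)
  also have "\<dots> \<le> norm ((Q t ** transpose (Q t)) ** G t) + norm (G t ** (Q t ** transpose (Q t)))"
    by (rule norm_triangle_ineq)
  also have "\<dots> \<le> (norm (Q t) * norm (Q t)) * norm (G t) + norm (G t) * (norm (Q t) * norm (Q t))"
  proof (intro add_mono)
    show "norm ((Q t ** transpose (Q t)) ** G t) \<le> (norm (Q t) * norm (Q t)) * norm (G t)"
    proof -
      have "norm (Q t ** transpose (Q t)) \<le> norm (Q t) * norm (Q t)"
        using norm_mm[of "Q t" "transpose (Q t)"] by (simp add: norm_tr)
      then show ?thesis using norm_mm[of "Q t ** transpose (Q t)" "G t"]
        by (meson mult_right_mono norm_ge_zero order_trans)
    qed
    show "norm (G t ** (Q t ** transpose (Q t))) \<le> norm (G t) * (norm (Q t) * norm (Q t))"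
    proof -
      have "norm (Q t ** transpose (Q t)) \<le> norm (Q t) * norm (Q t)"
        using norm_mm[of "Q t" "transpose (Q t)"] by (simp add: norm_tr)
      then show ?thesis using norm_mm[of "G t" "Q t ** transpose (Q t)"]
        by (meson mult_left_mono norm_ge_zero order_trans)
    qed
  qed
  also have "\<dots> = 2 * norm (G t) * qq t"
    by (simp add: qq_def dot_square_norm power2_eq_square)
  finally show ?thesis .
qed

lemma N0: "N 0 = 0" by (simp add: N_def Z0 Y0)

end


context flowctx begin

definition "AA T = 8 * \<beta> T / n"
definition "BB T = n * lam^2 * KK / (2 * \<beta> T)"
definition "rr T = sqrt (BB T / AA T)"
definition "c2 = sqrt 8 / n"
definition "gam T t = c2 * (rr T + sqrt KK * exp (- (AA T * t / 2)))"
definition "Gam T t = c2 * (rr T * t + sqrt KK * (2 / AA T) * (1 - exp (- (AA T * t / 2))))"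
definition "E0 = 2 * real CARD('n)"

lemma AA_pos: "AA T > 0" using beta_pos n_pos by (simp add: AA_def)
lemma BB_nonneg: "BB T \<ge> 0"
  using beta_pos[of T] n_pos KK_nonneg by (auto simp: BB_def intro!: divide_nonneg_pos mult_nonneg_nonneg)
lemma rr_nonneg: "rr T \<ge> 0"
  using BB_nonneg[of T] AA_pos[of T] by (simp add: rr_def)
lemma c2_pos: "c2 > 0" using n_pos by (simp add: c2_def)

lemma beta_mono: "t \<le> T \<Longrightarrow> \<beta> T \<le> \<beta> t"
  using lpos apos by (simp add: \<beta>_def)

lemma W0: "W 0 = 0" by (simp add: W_N N0)
lemma Phi0: "Phi 0 = KK" by (simp add: Phi_def KK_def W0)

lemma Phi_bound: assumes "0 \<le> s" "s \<le> T"
  shows "Phi s \<le> KK * exp (- (AA T * s)) + BB T / AA T"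
proof -
  have A: "AA T > 0" by (rule AA_pos)
  have "(\<lambda>t. Phi t - BB T / AA T) s \<le> (\<lambda>t. Phi t - BB T / AA T) 0 * exp ((\<lambda>t. - AA T * t) s - (\<lambda>t. - AA T * t) 0)"
  proof (rule gronwall[OF assms(1)])
    fix t assume t: "0 \<le> t" "t \<le> s"
    show "((\<lambda>t. Phi t - BB T / AA T) has_real_derivative Phid t) (at t within {0..})"
      using Phi_deriv[OF t(1)] by (auto intro!: derivative_eq_intros)
    show "((\<lambda>t. - AA T * t) has_real_derivative - AA T) (at t within {0..})"
      by (auto intro!: derivative_eq_intros)
    have bt: "\<beta> T \<le> \<beta> t" using beta_mono t assms by simp
    have "Phid t \<le> - (8 * \<beta> t / n) * Phi t + n * lam^2 * KK / (2 * \<beta> t)"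
      by (rule Phi_ineq[OF t(1)])
    also have "- (8 * \<beta> t / n) * Phi t \<le> - (8 * \<beta> T / n) * Phi t"
      using bt n_pos Phi_nonneg[of t] by (intro mult_right_mono) (auto simp: divide_right_mono)
    also have "n * lam^2 * KK / (2 * \<beta> t) \<le> n * lam^2 * KK / (2 * \<beta> T)"
      using bt n_pos KK_nonneg beta_pos[of T]
      by (intro divide_left_mono) auto
    finally have "Phid t \<le> - AA T * Phi t + BB T" by (simp add: AA_def BB_def)
    then show "Phid t \<le> - AA T * (Phi t - BB T / AA T)"
      using A by (simp add: algebra_simps)
  qed
  then have "Phi s - BB T / AA T \<le> (KK - BB T / AA T) * exp (- (AA T * s))"
    by (simp add: Phi0)
  also have "\<dots> \<le> KK * exp (- (AA T * s))"
    using A BB_nonneg[of T] by (intro mult_right_mono) auto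
  finally show ?thesis by simp
qed

lemma sqrt_exp: "sqrt (exp x) = exp (x / 2)"
proof -
  have "exp x = (exp (x / 2))^2" by (simp add: power2_eq_square exp_add[symmetric])
  then show ?thesis by simp
qed

lemma normG_bound: assumes "0 \<le> s" "s \<le> T" shows "norm (G s) \<le> gam T s"
proof -
  have "norm (G s) \<le> c2 * sqrt (Phi s)" using normG by (simp add: c2_def)
  also have "sqrt (Phi s) \<le> sqrt (KK * exp (- (AA T * s)) + BB T / AA T)"
    using Phi_bound[OF assms] by simp
  also have "\<dots> \<le> sqrt (KK * exp (- (AA T * s))) + sqrt (BB T / AA T)"
    by (rule sqrt_add_le_add_sqrt) (use KK_nonneg BB_nonneg[of T] AA_pos[of T] in \<open>auto intro: divide_nonneg_pos\<close>)
  also have "sqrt (KK * exp (- (AA T * s))) = sqrt KK * exp (- (AA T * s / 2))"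
    by (simp add: real_sqrt_mult sqrt_exp)
  finally show ?thesis using c2_pos BB_nonneg[of T] AA_pos[of T] by (simp add: gam_def rr_def mult_left_mono algebra_simps)
qed

lemma Gam_deriv: "((Gam T) has_real_derivative gam T t) (at t within S)"
  unfolding Gam_def[abs_def] gam_def
  apply (rule DERIV_cong)
   apply (auto intro!: derivative_eq_intros)[1]
  apply (insert AA_pos[of T])
  apply (simp add: divide_simps)
  apply (simp add: algebra_simps)
  done

lemma gam_nonneg: "gam T t \<ge> 0"
  using c2_pos KK_nonneg rr_nonneg[of T] by (simp add: gam_def)

lemma Gam0: "Gam T 0 = 0" by (simp add: Gam_def)

lemma Gam_mono: assumes "0 \<le> t" "t \<le> T" shows "Gam T t \<le> Gam T T"
proof -
  have 1: "rr T * t \<le> rr T * T" using assms rr_nonneg[of T] by (intro mult_left_mono) auto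
  have "exp (- (AA T * T / 2)) \<le> exp (- (AA T * t / 2))"
    using AA_pos[of T] assms by (simp add: mult_left_mono)
  then have 2: "sqrt KK * (2 / AA T) * (1 - exp (- (AA T * t / 2))) \<le> sqrt KK * (2 / AA T) * (1 - exp (- (AA T * T / 2)))"
    using KK_nonneg AA_pos[of T] by (intro mult_left_mono) auto
  have "rr T * t + sqrt KK * (2 / AA T) * (1 - exp (- (AA T * t / 2))) \<le> rr T * T + sqrt KK * (2 / AA T) * (1 - exp (- (AA T * T / 2)))"
    using 1 2 by linarith
  then show ?thesis unfolding Gam_def using c2_pos by (intro mult_left_mono) auto
qed

lemma EE_bound: assumes "0 \<le> s" "s \<le> T" shows "EE s \<le> E0 * exp (2 * Gam T s)"
proof -
  have "EE s \<le> EE 0 * exp ((\<lambda>t. 2 * Gam T t) s - (\<lambda>t. 2 * Gam T t) 0)"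
  proof (rule gronwall[OF assms(1) EE_deriv])
    fix t assume t: "0 \<le> t" "t \<le> s"
    show "((\<lambda>t. 2 * Gam T t) has_real_derivative 2 * gam T t) (at t within {0..})"
      by (rule derivative_eq_intros Gam_deriv refl)+ simp
    have "2 * inner (Z t) (- (G t ** Z t)) + 2 * inner (Y t) (G t ** Y t) \<le> 2 * norm (G t) * EE t"
      by (rule EE_d_le)
    also have "\<dots> \<le> 2 * gam T t * EE t"
      using normG_bound[of t T] t assms EE_nonneg[of t] by (intro mult_right_mono) auto
    finally show "2 * inner (Z t) (- (G t ** Z t)) + 2 * inner (Y t) (G t ** Y t) \<le> 2 * gam T t * EE t" .
  qed
  then show ?thesis by (simp add: EE0 E0_def Gam0)
qed

lemma qq_bound: assumes "0 \<le> s" "s \<le> T" shows "qq s \<le> E0 * (exp (2 * Gam T s) - 1)"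
proof -
  have "(\<lambda>t. qq t - E0 * exp (2 * Gam T t)) s \<le> (\<lambda>t. qq t - E0 * exp (2 * Gam T t)) 0"
  proof (rule mono_deriv[OF assms(1)])
    fix t assume t: "0 \<le> t" "t \<le> s"
    show "((\<lambda>t. qq t - E0 * exp (2 * Gam T t)) has_real_derivative
        2 * inner (Q t) (- (G t ** Z t) - G t ** Y t) - E0 * (exp (2 * Gam T t) * (2 * gam T t))) (at t within {0..})"
      by (rule derivative_eq_intros qq_deriv Gam_deriv refl | use t in simp)+
    have "2 * inner (Q t) (- (G t ** Z t) - G t ** Y t) \<le> 2 * norm (G t) * EE t" by (rule qq_d_le)
    also have "\<dots> \<le> 2 * gam T t * EE t"
      using normG_bound[of t T] t assms EE_nonneg[of t] by (intro mult_right_mono) auto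
    also have "\<dots> \<le> 2 * gam T t * (E0 * exp (2 * Gam T t))"
      using EE_bound[of t T] t assms gam_nonneg[of T t] by (intro mult_left_mono) auto
    finally show "2 * inner (Q t) (- (G t ** Z t) - G t ** Y t) - E0 * (exp (2 * Gam T t) * (2 * gam T t)) \<le> 0"
      by (simp add: algebra_simps)
  qed
  then show ?thesis by (simp add: qq0 Gam0 E0_def algebra_simps)
qed

lemma N_off_bound: assumes T: "0 \<le> T" and off: "chi \<Omega> i j = 0" "chi \<Omega> j i = 0"
  shows "\<bar>N T $ i $ j\<bar> \<le> 2 * E0 * (exp (2 * Gam T T) - 1) * Gam T T"
proof -
  define M where "M = 2 * E0 * (exp (2 * Gam T T) - 1)"
  have key: "\<And>t. 0 \<le> t \<Longrightarrow> t \<le> T \<Longrightarrow> \<bar>Nd t $ i $ j\<bar> \<le> M * gam T t"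
  proof -
    fix t assume t: "0 \<le> t" "t \<le> T"
    have "\<bar>Nd t $ i $ j\<bar> \<le> 2 * norm (G t) * qq t" by (rule Nd_off[OF t(1) off])
    also have "\<dots> \<le> 2 * gam T t * qq t"
      using normG_bound[OF t] qq_nonneg[of t] by (intro mult_right_mono) auto
    also have "\<dots> \<le> 2 * gam T t * (E0 * (exp (2 * Gam T t) - 1))"
      using qq_bound[OF t] gam_nonneg[of T t] by (intro mult_left_mono) auto
    also have "\<dots> \<le> 2 * gam T t * (E0 * (exp (2 * Gam T T) - 1))"
      using Gam_mono[OF t] gam_nonneg[of T t] by (intro mult_left_mono) (auto simp: E0_def)
    finally show "\<bar>Nd t $ i $ j\<bar> \<le> M * gam T t" by (simp add: M_def algebra_simps)
  qed
  have up: "(\<lambda>t. N t $ i $ j - M * Gam T t) T \<le> (\<lambda>t. N t $ i $ j - M * Gam T t) 0"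
  proof (rule mono_deriv[OF T])
    fix t assume t: "0 \<le> t" "t \<le> T"
    show "((\<lambda>t. N t $ i $ j - M * Gam T t) has_real_derivative Nd t $ i $ j - M * gam T t) (at t within {0..})"
      by (rule derivative_eq_intros N_ent_deriv Gam_deriv refl | use t in simp)+
    show "Nd t $ i $ j - M * gam T t \<le> 0" using key[OF t] by simp
  qed
  have lo: "(\<lambda>t. - N t $ i $ j - M * Gam T t) T \<le> (\<lambda>t. - N t $ i $ j - M * Gam T t) 0"
  proof (rule mono_deriv[OF T])
    fix t assume t: "0 \<le> t" "t \<le> T"
    show "((\<lambda>t. - N t $ i $ j - M * Gam T t) has_real_derivative - Nd t $ i $ j - M * gam T t) (at t within {0..})"
      by (rule derivative_eq_intros N_ent_deriv Gam_deriv refl | use t in simp)+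
    show "- Nd t $ i $ j - M * gam T t \<le> 0" using key[OF t] by simp
  qed
  show ?thesis using up lo by (simp add: N0 Gam0 M_def abs_le_iff algebra_simps)
qed

end


context flowctx begin

lemma final_bounds:
  fixes C c T :: real
  assumes C: "lam \<le> C" and a1: "a > 1" and c: "0 < c" "c < 1" and T: "T = (1 - c) / lam * ln a"
  shows "mm i j \<ge> 1 \<Longrightarrow> (W T $ i $ j - Xs $ i $ j)^2 \<le>
            KK * exp (- (8 * (1 - c) / (n * C) * (a powr (2 * c) * ln a))) + n^2 * C^2 * KK / 16 * a powr (- 4 * c)"
    and "chi \<Omega> i j = 0 \<Longrightarrow> chi \<Omega> j i = 0 \<Longrightarrow> \<bar>W T $ i $ j\<bar> \<le>
            2 * E0 * (a powr (2 * c) * ((exp (2 * ((sqrt 8 * sqrt KK / 4 + 1) * (ln a + 1) / a powr (2 * c))) - 1) *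
               ((sqrt 8 * sqrt KK / 4 + 1) * (ln a + 1) / a powr (2 * c))))"
proof -
  have lna: "ln a > 0" using a1 by simp
  have T0: "T \<ge> 0" using T lpos c lna by simp
  have bT: "\<beta> T = a powr (2 * c)"
  proof -
    have h: "lam * T = (1 - c) * ln a" using T lpos by simp
    have h2: "- 2 * lam * T = (- 2 * (1 - c)) * ln a"
    proof -
      have "- 2 * lam * T = - 2 * (lam * T)" by simp
      also have "\<dots> = - 2 * ((1 - c) * ln a)" by (simp only: h)
      also have "\<dots> = (- 2 * (1 - c)) * ln a" by (rule mult.assoc[symmetric])
      finally show ?thesis .
    qed
    have e1: "a powr (- 2 * (1 - c)) = exp ((- 2 * (1 - c)) * ln a)"
      using apos by (simp add: powr_def)
    have e2: "exp (- 2 * lam * T) = a powr (- 2 * (1 - c))"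
      by (simp only: h2 e1)
    have e3: "a powr 2 = a ^ 2" using apos by (simp add: powr_numeral)
    have "\<beta> T = a powr 2 * a powr (- 2 * (1 - c))"
      by (simp only: \<beta>_def e2 e3)
    also have "\<dots> = a powr (2 * c)" by (simp add: powr_add[symmetric] algebra_simps)
    finally show ?thesis .
  qed
  have bpos: "a powr (2 * c) > 0" using apos by simp
  have Cpos: "C > 0" using C lpos by simp
  have BA: "BB T / AA T = n^2 * lam^2 * KK / (16 * (a powr (2 * c))^2)"
    unfolding BB_def AA_def bT using n_pos bpos by (simp add: field_simps power2_eq_square)
  show "mm i j \<ge> 1 \<Longrightarrow> (W T $ i $ j - Xs $ i $ j)^2 \<le>
            KK * exp (- (8 * (1 - c) / (n * C) * (a powr (2 * c) * ln a))) + n^2 * C^2 * KK / 16 * a powr (- 4 * c)"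
  proof -
    assume m: "mm i j \<ge> 1"
    have "(W T $ i $ j - Xs $ i $ j)^2 \<le> mm i j * (W T $ i $ j - Xs $ i $ j)^2"
      using m by (simp add: mult_le_cancel_right1)
    also have "\<dots> \<le> (\<Sum>j\<in>UNIV. mm i j * (W T $ i $ j - Xs $ i $ j)^2)"
      by (rule member_le_sum) (auto intro: mult_nonneg_nonneg mm_props(1))
    also have "\<dots> \<le> Phi T" unfolding Phi_def
      by (rule member_le_sum[of _ _ "\<lambda>i. \<Sum>j\<in>UNIV. mm i j * (W T $ i $ j - Xs $ i $ j)^2"])
         (auto intro!: sum_nonneg mult_nonneg_nonneg mm_props(1))
    also have "\<dots> \<le> KK * exp (- (AA T * T)) + BB T / AA T" by (rule Phi_bound[OF T0 order_refl])
    also have "KK * exp (- (AA T * T)) \<le> KK * exp (- (8 * (1 - c) / (n * C) * (a powr (2 * c) * ln a)))"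
    proof -
      have "AA T * T = 8 * (1 - c) / (n * lam) * (a powr (2 * c) * ln a)"
        unfolding AA_def bT unfolding T using n_pos lpos by (simp add: field_simps)
      also have "\<dots> \<ge> 8 * (1 - c) / (n * C) * (a powr (2 * c) * ln a)"
        using n_pos lpos C c lna bpos
        by (intro mult_right_mono divide_left_mono mult_left_mono) (auto intro: mult_pos_pos)
      finally show ?thesis using KK_nonneg by (intro mult_left_mono) auto
    qed
    also have "BB T / AA T \<le> n^2 * C^2 * KK / 16 * a powr (- 4 * c)"
    proof -
      have "lam^2 \<le> C^2" using C lpos by (intro power_mono) auto
      then have "n^2 * lam^2 * KK \<le> n^2 * C^2 * KK" using KK_nonneg n_pos by (intro mult_right_mono mult_left_mono) auto
      moreover have "(a powr (2 * c))^2 = a powr (4 * c)" by (simp add: powr_numeral[symmetric] powr_powr algebra_simps)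
      moreover have "a powr (- 4 * c) = 1 / a powr (4 * c)" by (simp add: powr_minus divide_inverse)
      ultimately show ?thesis unfolding BA using bpos by (simp add: divide_right_mono)
    qed
    finally show ?thesis by simp
  qed
  show "chi \<Omega> i j = 0 \<Longrightarrow> chi \<Omega> j i = 0 \<Longrightarrow> \<bar>W T $ i $ j\<bar> \<le>
            2 * E0 * (a powr (2 * c) * ((exp (2 * ((sqrt 8 * sqrt KK / 4 + 1) * (ln a + 1) / a powr (2 * c))) - 1) *
               ((sqrt 8 * sqrt KK / 4 + 1) * (ln a + 1) / a powr (2 * c))))"
  proof -
    assume off: "chi \<Omega> i j = 0" "chi \<Omega> j i = 0"
    define xb where "xb = (sqrt 8 * sqrt KK / 4 + 1) * (ln a + 1) / a powr (2 * c)"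
    have G0: "Gam T T \<ge> 0" using Gam_mono[OF order_refl T0] by (simp add: Gam0)
    have Gxb: "Gam T T \<le> xb"
    proof -
      have rr: "rr T = n * lam * sqrt KK / (4 * a powr (2 * c))"
      proof -
        have "BB T / AA T = (n * lam * sqrt KK / (4 * a powr (2 * c)))^2"
          unfolding BA using KK_nonneg by (simp add: power_mult_distrib power_divide)
        then show ?thesis unfolding rr_def using n_pos lpos KK_nonneg bpos by simp
      qed
      have "Gam T T \<le> c2 * (rr T * T + sqrt KK * (2 / AA T))"
      proof -
        have "sqrt KK * (2 / AA T) * (1 - exp (- (AA T * T / 2))) \<le> sqrt KK * (2 / AA T)"
          by (rule mult_left_le) (use KK_nonneg AA_pos[of T] in auto)
        then show ?thesis
          unfolding Gam_def using c2_pos by (intro mult_left_mono add_left_mono) auto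
      qed
      also have "rr T * T = n * sqrt KK * (1 - c) * ln a / (4 * a powr (2 * c))"
        unfolding rr unfolding T using lpos bpos by (simp add: field_simps)
      also have "sqrt KK * (2 / AA T) = n * sqrt KK / (4 * a powr (2 * c))"
        unfolding AA_def bT using n_pos bpos by (simp add: field_simps)
      also have "c2 * (n * sqrt KK * (1 - c) * ln a / (4 * a powr (2 * c)) + n * sqrt KK / (4 * a powr (2 * c)))
          = sqrt 8 * sqrt KK / 4 * ((1 - c) * ln a + 1) / a powr (2 * c)"
        unfolding c2_def using n_pos bpos by (simp add: field_simps)
      also have "\<dots> \<le> xb" unfolding xb_def
        using c lna bpos KK_nonneg
        by (intro divide_right_mono mult_mono) (auto simp: mult_le_cancel_right1 mult_nonneg_nonneg)
      finally show ?thesis .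
    qed
    have "\<bar>W T $ i $ j\<bar> = a powr (2 * c) * \<bar>N T $ i $ j\<bar>"
      using bpos by (simp add: W_N bT abs_mult)
    also have "\<dots> \<le> a powr (2 * c) * (2 * E0 * (exp (2 * Gam T T) - 1) * Gam T T)"
      using N_off_bound[OF T0 off] bpos by (intro mult_left_mono) auto
    also have "\<dots> \<le> a powr (2 * c) * (2 * E0 * (exp (2 * xb) - 1) * xb)"
      using G0 Gxb bpos by (intro mult_left_mono mult_mono) (auto simp: E0_def)
    finally show ?thesis by (simp add: xb_def algebra_simps)
  qed
qed

end


lemma asym1: "c > (0::real) \<Longrightarrow> k > 0 \<Longrightarrow> ((\<lambda>x::real. exp (- (k * (x powr (2*c) * ln x)))) \<longlongrightarrow> 0) at_top"
  by real_asymp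
lemma asym2: "c > (0::real) \<Longrightarrow> ((\<lambda>x::real. x powr (- 4 * c)) \<longlongrightarrow> 0) at_top"
  by real_asymp
lemma asym3: "c > (0::real) \<Longrightarrow> k > 0 \<Longrightarrow> ((\<lambda>x::real. x powr (2*c) * ((exp (2 * (k * (ln x + 1) / x powr (2*c))) - 1) * (k * (ln x + 1) / x powr (2*c)))) \<longlongrightarrow> 0) at_top"
  by real_asymp

theorem corollary3p3:
  fixes Xs :: "real^'n::finite^'n"
    and \<Omega> :: "('n \<times> 'n) set"
    and lam :: "real \<Rightarrow> real"
    and p c :: real
    and flow :: "real \<Rightarrow> real \<Rightarrow> 'n params"
    and i j :: 'n
  assumes sym: "transpose Xs = Xs"
    and \<Omega>_ne: "\<Omega> \<noteq> {}"
    and p_pos: "p > 0"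
    and lam_pos: "\<forall>\<alpha>>0. lam \<alpha> > 0"
    and lam_Theta: "lam \<in> \<Theta>[at_top](\<lambda>\<alpha>. \<alpha> powr (- p))"
    and flow: "\<forall>\<alpha>>0. is_gradient_flow (loss Xs \<Omega> (lam \<alpha>))
                         (mat \<alpha>, mat \<alpha>) (flow \<alpha>)"
    and c: "0 < c" "c < 1"
  shows "((\<lambda>\<alpha>. Wmat (flow \<alpha> ((1 - c) / lam \<alpha> * ln \<alpha>)) $ i $ j)
            \<longlongrightarrow> (if (i, j) \<in> \<Omega> \<or> (j, i) \<in> \<Omega> then Xs $ i $ j else 0)) at_top"
proof -
  obtain C where C: "C > 0" "eventually (\<lambda>x. norm (lam x) \<le> C * norm (x powr (- p))) at_top"
    using landau_o.bigE[OF bigthetaD1[OF lam_Theta]] by blast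
  have ev: "eventually (\<lambda>\<alpha>. \<alpha> > 1 \<and> lam \<alpha> \<le> C) at_top"
    using C(2) eventually_gt_at_top[of 1]
  proof eventually_elim
    case (elim x)
    have "x powr p \<ge> 1" using elim(2) p_pos by (intro ge_one_powr_ge_zero) auto
    then have "x powr (- p) \<le> 1" using elim(2) by (simp add: powr_minus inverse_le_1_iff)
    then have "C * \<bar>x powr (- p)\<bar> \<le> C" using C(1) elim(2) by (simp add: mult_left_le)
    then show ?case using elim by simp
  qed
  define n0 where "n0 = real (card \<Omega>)"
  define KK0 where "KK0 = (\<Sum>i\<in>UNIV. \<Sum>j\<in>UNIV. (chi \<Omega> i j + chi \<Omega> j i) * (Xs $ i $ j)^2)"
  define E00 where "E00 = 2 * real CARD('n)"
  have n0: "n0 > 0" using \<Omega>_ne by (simp add: n0_def card_gt_0_iff)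
  have KK0: "KK0 \<ge> 0" unfolding KK0_def by (intro sum_nonneg) (auto simp: chi_def)
  have loc: "flowctx Xs \<Omega> (lam \<alpha>) \<alpha> (flow \<alpha>)" if "\<alpha> > 1" for \<alpha>
    using that sym \<Omega>_ne lam_pos flow by unfold_locales auto
  show ?thesis
  proof (cases "(i, j) \<in> \<Omega> \<or> (j, i) \<in> \<Omega>")
    case True
    define k1 where "k1 = 8 * (1 - c) / (n0 * C)"
    have k1: "k1 > 0" using c n0 C(1) by (simp add: k1_def)
    define g where "g = (\<lambda>\<alpha>. KK0 * exp (- (k1 * (\<alpha> powr (2 * c) * ln \<alpha>))) + n0^2 * C^2 * KK0 / 16 * \<alpha> powr (- 4 * c))"
    have g0: "(g \<longlongrightarrow> 0) at_top"
      unfolding g_def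
      using tendsto_add[OF tendsto_mult_right_zero[OF asym1[OF c(1) k1], of KK0]
                           tendsto_mult_right_zero[OF asym2[OF c(1)], of "n0^2 * C^2 * KK0 / 16"]]
      by simp
    have "((\<lambda>\<alpha>. Wmat (flow \<alpha> ((1 - c) / lam \<alpha> * ln \<alpha>)) $ i $ j - Xs $ i $ j) \<longlongrightarrow> 0) at_top"
    proof (rule Lim_null_comparison[OF _ tendsto_real_sqrt[OF g0, simplified]])
      show "eventually (\<lambda>\<alpha>. norm (Wmat (flow \<alpha> ((1 - c) / lam \<alpha> * ln \<alpha>)) $ i $ j - Xs $ i $ j) \<le> sqrt (g \<alpha>)) at_top"
        using ev
      proof eventually_elim
        case (elim \<alpha>)
        interpret F: flowctx Xs \<Omega> "lam \<alpha>" \<alpha> "flow \<alpha>" using loc elim by auto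
        have m: "F.mm i j \<ge> 1" using True by (auto simp: F.mm_def chi_def)
        have "(F.W ((1 - c) / lam \<alpha> * ln \<alpha>) $ i $ j - Xs $ i $ j)^2 \<le> g \<alpha>"
          using F.final_bounds(1)[OF conjunct2[OF elim] conjunct1[OF elim] c refl m]
          by (simp add: g_def k1_def F.KK_def F.n_def KK0_def n0_def F.mm_def)
        then have "sqrt ((F.W ((1 - c) / lam \<alpha> * ln \<alpha>) $ i $ j - Xs $ i $ j)^2) \<le> sqrt (g \<alpha>)"
          using real_sqrt_le_mono by blast
        then show ?case by (simp add: F.W_def)
      qed
    qed
    then show ?thesis using True by (simp add: LIM_zero_cancel)
  next
    case False
    have off: "chi \<Omega> i j = 0" "chi \<Omega> j i = 0" using False by (auto simp: chi_def)
    define k where "k = sqrt 8 * sqrt KK0 / 4 + 1"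
    have k: "k > 0" using KK0 by (simp add: k_def add_nonneg_pos)
    have "((\<lambda>\<alpha>. Wmat (flow \<alpha> ((1 - c) / lam \<alpha> * ln \<alpha>)) $ i $ j) \<longlongrightarrow> 0) at_top"
    proof (rule Lim_null_comparison[OF _ tendsto_mult_right_zero[OF asym3[OF c(1) k], of "2 * E00"]])
      show "eventually (\<lambda>\<alpha>. norm (Wmat (flow \<alpha> ((1 - c) / lam \<alpha> * ln \<alpha>)) $ i $ j) \<le>
         2 * E00 * (\<alpha> powr (2*c) * ((exp (2 * (k * (ln \<alpha> + 1) / \<alpha> powr (2*c))) - 1) * (k * (ln \<alpha> + 1) / \<alpha> powr (2*c))))) at_top"
        using ev
      proof eventually_elim
        case (elim \<alpha>)
        interpret F: flowctx Xs \<Omega> "lam \<alpha>" \<alpha> "flow \<alpha>" using loc elim by auto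
        show ?case
          using F.final_bounds(2)[OF conjunct2[OF elim] conjunct1[OF elim] c refl off]
          by (simp add: k_def F.KK_def KK0_def F.E0_def E00_def F.W_def F.mm_def)
      qed
    qed
    then show ?thesis using False by simp
  qed
qed


end
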